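(* Let $P^1,\dots,P^m\in\Delta^n$ ($m\ge 2$) be the rows of a channel matrix $\Phi$ and assume they are in general position. For $k=0,1,\dots,m-2$ let $L_k=L(P^{k+1},\dots,P^m)$. Let $Q^0\in L_0$ be the equidistant point from $P^1,\dots,P^m$, and define recursively $Q^k=\pi(Q^{k-1}\,|\,L_k)$ for $k=1,\dots,m-2$. Let $\boldsymbol\lambda^k=(\lambda^k_1,\dots,\lambda^k_m)$ be the barycentric coordinate of $Q^k$ about $P^1,\dots,P^m$. Let $K\in\{0,1,\dots,m-2\}$ and assume: for every $k=0,1,\dots,K-1$, $\lambda^k_i=0$ for $i=1,\dots,k$, $\lambda^k_{k+1}<0$, and $\lambda^k_i>0$ for $i=k+2,\dots,m$; and $\lambda^K_i=0$ for $i=1,\dots,K$ and $\lambda^K_i>0$ for $i=K+1,\dots,m$ (when $K=0$ the assumption is instead $\lambda^0_i\ge 0$ for all $i=1,\dots,m$). Then the output distribution achieving the channel capacity is $Q^\ast=Q^K$, and the channel capacity is $C=D(P^{K+1}\|Q^K)$.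
   Context: $\Delta^n=\{Q=(Q_1,\dots,Q_n): Q_j>0,\ \sum_j Q_j=1\}$ and $\bar\Delta^m=\{\boldsymbol\lambda\in\mathbb{R}^m:\lambda_i\ge0,\sum_i\lambda_i=1\}$. $D(Q\|Q')=\sum_j Q_j\log(Q_j/Q'_j)$ is the Kullback–Leibler divergence. The channel matrix $\Phi$ is the $m\times n$ matrix with rows $P^i=(P^i_1,\dots,P^i_n)$ (conditional output distributions given input $x_i$). The rows are in general position if $P^2-P^1,\dots,P^m-P^1$ are linearly independent. For points $S^1,\dots,S^r\in\Delta^n$, $L(S^1,\dots,S^r)=\{\sum_i\lambda_iS^i:\sum_i\lambda_i=1\}\cap\Delta^n$ (affine subspace). For $Q'\in\Delta^n$ and such an affine subspace $L$, $\pi(Q'|L)$ denotes the unique $Q\in L$ minimizing $D(Q\|Q')$. The barycentric coordinate of $Q\in L(P^1,\dots,P^m)$ about $P^1,\dots,P^m$ is the unique $\boldsymbol\lambda\in\mathbb{R}^m$ with $\sum_i\lambda_i=1$ and $Q=\sum_i\lambda_iP^i$. The equidistant point from $P^1,\dots,P^m$ is the unique $Q^0\in L(P^1,\dots,P^m)$ with $D(P^1\|Q^0)=\dots=D(P^m\|Q^0)$. The mutual information is $I(\boldsymbol\lambda,\Phi)=\sum_{i,j}\lambda_iP^i_j\log(P^i_j/Q_j)$ with $Q=\boldsymbol\lambda\Phi$; the channel capacity is $C=\max_{\boldsymbol\lambda\in\bar\Delta^m}I(\boldsymbol\lambda,\Phi)$, and the capacity-achieving output distribution $Q^\ast$ is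 $\boldsymbol\lambda^\ast\Phi$ for a maximizing $\boldsymbol\lambda^\ast$ (it is unique, and equals the minimizer of $\max_i D(P^i\|Q)$ over output distributions $Q$). *)

theory Defs
  imports Complex_Main
begin

text \<open>Conventions: output symbols are indexed by j in {1..n}, input symbols by
  i in {1..m}. A distribution on the output alphabet is a function nat => real,
  only its values on {1..n} matter. The channel matrix is P :: nat => nat => real,
  row i being P i (the conditional output distribution given input x_i).\<close>

definition open_simplex :: "nat \<Rightarrow> (nat \<Rightarrow> real) \<Rightarrow> bool" where
  "open_simplex n Q \<longleftrightarrow> (\<forall>j\<in>{1..n}. Q j > 0) \<and> (\<Sum>j=1..n. Q j) = 1"

definition closed_simplex :: "nat \<Rightarrow> (nat \<Rightarrow> real) \<Rightarrow> bool" where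
  "closed_simplex m l \<longleftrightarrow> (\<forall>i\<in>{1..m}. l i \<ge> 0) \<and> (\<Sum>i=1..m. l i) = 1"

definition KL :: "nat \<Rightarrow> (nat \<Rightarrow> real) \<Rightarrow> (nat \<Rightarrow> real) \<Rightarrow> real" where
  "KL n Q Q' = (\<Sum>j=1..n. Q j * ln (Q j / Q' j))"

definition general_position :: "nat \<Rightarrow> nat \<Rightarrow> (nat \<Rightarrow> nat \<Rightarrow> real) \<Rightarrow> bool" where
  "general_position m n P \<longleftrightarrow>
     (\<forall>c::nat \<Rightarrow> real. (\<forall>j\<in>{1..n}. (\<Sum>i=2..m. c i * (P i j - P 1 j)) = 0)
        \<longrightarrow> (\<forall>i\<in>{2..m}. c i = 0))"

definition affL :: "nat \<Rightarrow> (nat \<Rightarrow> nat \<Rightarrow> real) \<Rightarrow> nat set \<Rightarrow> (nat \<Rightarrow> real) set" where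
  "affL n S A = {Q. open_simplex n Q \<and>
     (\<exists>l::nat \<Rightarrow> real. (\<Sum>i\<in>A. l i) = 1 \<and> (\<forall>j\<in>{1..n}. Q j = (\<Sum>i\<in>A. l i * S i j)))}"

definition is_proj :: "nat \<Rightarrow> (nat \<Rightarrow> real) \<Rightarrow> (nat \<Rightarrow> real) set \<Rightarrow> (nat \<Rightarrow> real) \<Rightarrow> bool" where
  "is_proj n Q' L Q \<longleftrightarrow> Q \<in> L \<and> (\<forall>Q''\<in>L. KL n Q Q' \<le> KL n Q'' Q')"

definition is_bary :: "nat \<Rightarrow> nat \<Rightarrow> (nat \<Rightarrow> nat \<Rightarrow> real) \<Rightarrow> (nat \<Rightarrow> real) \<Rightarrow> (nat \<Rightarrow> real) \<Rightarrow> bool" where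
  "is_bary m n P Q l \<longleftrightarrow> (\<Sum>i=1..m. l i) = 1 \<and> (\<forall>j\<in>{1..n}. Q j = (\<Sum>i=1..m. l i * P i j))"

definition out_dist :: "nat \<Rightarrow> (nat \<Rightarrow> nat \<Rightarrow> real) \<Rightarrow> (nat \<Rightarrow> real) \<Rightarrow> nat \<Rightarrow> real" where
  "out_dist m P l j = (\<Sum>i=1..m. l i * P i j)"

definition mutual_info :: "nat \<Rightarrow> nat \<Rightarrow> (nat \<Rightarrow> nat \<Rightarrow> real) \<Rightarrow> (nat \<Rightarrow> real) \<Rightarrow> real" where
  "mutual_info m n P l =
     (\<Sum>i=1..m. \<Sum>j=1..n. l i * P i j * ln (P i j / out_dist m P l j))"

definition capacity :: "nat \<Rightarrow> nat \<Rightarrow> (nat \<Rightarrow> nat \<Rightarrow> real) \<Rightarrow> real" where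
  "capacity m n P = Sup {mutual_info m n P l | l. closed_simplex m l}"

end

theory Submission
  imports Defs
begin

definition lin :: "nat \<Rightarrow> (nat \<Rightarrow> real) \<Rightarrow> (nat \<Rightarrow> real) \<Rightarrow> (nat \<Rightarrow> real) \<Rightarrow> real" where
  "lin n R Q Q' = (\<Sum>j=1..n. R j * ln (Q j / Q' j))"

definition inaff :: "nat \<Rightarrow> (nat \<Rightarrow> nat \<Rightarrow> real) \<Rightarrow> nat set \<Rightarrow> (nat \<Rightarrow> real) \<Rightarrow> bool" where
  "inaff n P A R \<longleftrightarrow> (\<exists>l::nat \<Rightarrow> real. (\<Sum>i\<in>A. l i) = 1 \<and> (\<forall>j\<in>{1..n}. R j = (\<Sum>i\<in>A. l i * P i j)))"

lemma term_deriv: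
  fixes q d c :: real
  assumes "q > 0" "c > 0"
  shows "((\<lambda>t. (q + t*d) * ln ((q + t*d)/c)) has_real_derivative (d * ln (q/c) + d)) (at 0)"
  using assms by (auto intro!: derivative_eq_intros simp: field_simps)

lemma ev_pos:
  fixes q d :: real assumes "q > 0"
  shows "eventually (\<lambda>t. q + t*d > 0) (nhds 0)"
proof -
  have "((\<lambda>t. q + t*d) \<longlongrightarrow> q + 0*d) (nhds 0)"
    by (intro tendsto_intros) (rule filterlim_ident)
  then show ?thesis using assms by (auto dest: order_tendstoD(1)[where a=0])
qed

lemma foc:
  assumes posQ': "\<forall>j\<in>{1..n}. Q' j > 0"
    and proj: "is_proj n Q' (affL n P A) Q"
    and finA: "finite A"
    and rows: "\<forall>i\<in>A. (\<Sum>j=1..n. P i j) = 1"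
    and R: "inaff n P A R"
  shows "lin n R Q Q' = KL n Q Q'"
proof -
  from proj have QL: "Q \<in> affL n P A" and minQ: "\<forall>Q''\<in>affL n P A. KL n Q Q' \<le> KL n Q'' Q'"
    unfolding is_proj_def by auto
  from QL obtain lq where posQ: "\<forall>j\<in>{1..n}. Q j > 0" and sQ: "(\<Sum>j=1..n. Q j) = 1"
    and lq1: "(\<Sum>i\<in>A. lq i) = 1" and lqQ: "\<forall>j\<in>{1..n}. Q j = (\<Sum>i\<in>A. lq i * P i j)"
    unfolding affL_def open_simplex_def by auto
  from R obtain l where l1: "(\<Sum>i\<in>A. l i) = 1" and lR: "\<forall>j\<in>{1..n}. R j = (\<Sum>i\<in>A. l i * P i j)"
    unfolding inaff_def by auto
  have sR: "(\<Sum>j=1..n. R j) = 1"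
  proof -
    have "(\<Sum>j=1..n. R j) = (\<Sum>j=1..n. \<Sum>i\<in>A. l i * P i j)" using lR by simp
    also have "\<dots> = (\<Sum>i\<in>A. l i * (\<Sum>j=1..n. P i j))"
      by (subst sum.swap) (simp add: sum_distrib_left)
    also have "\<dots> = (\<Sum>i\<in>A. l i)" using rows by simp
    finally show ?thesis using l1 by simp
  qed
  define D where "D j = R j - Q j" for j
  define F where "F t = KL n (\<lambda>j. Q j + t * D j) Q'" for t
  have ev: "eventually (\<lambda>t. \<forall>j\<in>{1..n}. Q j + t * D j > 0) (nhds 0)"
    using posQ by (intro eventually_ball_finite) (auto intro: ev_pos)
  then obtain d where d: "d > 0" "\<forall>t. dist t 0 < d \<longrightarrow> (\<forall>j\<in>{1..n}. Q j + t * D j > 0)"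
    unfolding eventually_nhds_metric by auto
  have mem: "(\<lambda>j. Q j + t * D j) \<in> affL n P A" if "\<forall>j\<in>{1..n}. Q j + t * D j > 0" for t
  proof -
    have s: "(\<Sum>j=1..n. Q j + t * D j) = 1"
      using sQ sR by (simp add: D_def sum.distrib sum_subtractf sum_distrib_left[symmetric])
    have "(\<Sum>i\<in>A. (1 - t) * lq i + t * l i) = 1"
      using lq1 l1 by (simp add: sum.distrib sum_distrib_left[symmetric])
    moreover have "\<forall>j\<in>{1..n}. Q j + t * D j = (\<Sum>i\<in>A. ((1 - t) * lq i + t * l i) * P i j)"
    proof
      fix j assume j: "j \<in> {1..n}"
      have "(\<Sum>i\<in>A. ((1 - t) * lq i + t * l i) * P i j)
          = (1 - t) * (\<Sum>i\<in>A. lq i * P i j) + t * (\<Sum>i\<in>A. l i * P i j)"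
        by (simp add: distrib_right sum.distrib sum_distrib_left mult.assoc)
      also have "\<dots> = Q j + t * D j" using lqQ lR j by (simp add: D_def algebra_simps)
      finally show "Q j + t * D j = (\<Sum>i\<in>A. ((1 - t) * lq i + t * l i) * P i j)" by simp
    qed
    ultimately show ?thesis using that s unfolding affL_def open_simplex_def by blast
  qed
  have F0: "F 0 = KL n Q Q'" by (simp add: F_def)
  have locmin: "\<forall>y. \<bar>0 - y\<bar> < d \<longrightarrow> F 0 \<le> F y"
    using d mem minQ F0 by (auto simp: F_def dist_real_def)
  have der: "(F has_real_derivative (\<Sum>j=1..n. D j * ln (Q j / Q' j) + D j)) (at 0)"
    unfolding F_def KL_def
    by (rule DERIV_sum) (use posQ posQ' in \<open>auto intro: term_deriv\<close>)
  have "(\<Sum>j=1..n. D j * ln (Q j / Q' j) + D j) = 0"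
    using DERIV_local_min[OF der d(1) locmin] .
  moreover have "(\<Sum>j=1..n. D j) = 0" using sR sQ by (simp add: D_def sum_subtractf)
  ultimately have "(\<Sum>j=1..n. D j * ln (Q j / Q' j)) = 0" by (simp add: sum.distrib)
  then show ?thesis
    by (simp add: lin_def KL_def D_def left_diff_distrib sum_subtractf)
qed

definition pos :: "nat \<Rightarrow> (nat \<Rightarrow> real) \<Rightarrow> bool" where
  "pos n Q \<longleftrightarrow> (\<forall>j\<in>{1..n}. Q j > 0)"

lemma KL_split:
  assumes "pos n R" "pos n Q" "pos n Q'"
  shows "KL n R Q = KL n R Q' - lin n R Q Q'"
  unfolding KL_def lin_def sum_subtractf[symmetric]
  by (rule sum.cong) (use assms in \<open>auto simp: pos_def ln_divide_pos algebra_simps\<close>)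

lemma lin_add:
  assumes "pos n Q1" "pos n Q2" "pos n Q3"
  shows "lin n R Q1 Q3 = lin n R Q1 Q2 + lin n R Q2 Q3"
  unfolding lin_def sum.distrib[symmetric]
  by (rule sum.cong) (use assms in \<open>auto simp: pos_def ln_divide_pos algebra_simps\<close>)

lemma lin_self: "lin n R Q Q = 0"
  unfolding lin_def by (rule sum.neutral) simp

lemma lin_comb:
  assumes "\<forall>j\<in>{1..n}. R j = (\<Sum>i\<in>A. l i * P i j)"
  shows "lin n R Q Q' = (\<Sum>i\<in>A. l i * lin n (P i) Q Q')"
proof -
  have "lin n R Q Q' = (\<Sum>j=1..n. \<Sum>i\<in>A. l i * P i j * ln (Q j / Q' j))"
    unfolding lin_def using assms by (simp add: sum_distrib_right)
  also have "\<dots> = (\<Sum>i\<in>A. l i * lin n (P i) Q Q')"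
    by (subst sum.swap) (simp add: lin_def sum_distrib_left mult.assoc)
  finally show ?thesis .
qed

lemma inaff_mono:
  assumes "inaff n P B R" "B \<subseteq> A" "finite A"
  shows "inaff n P A R"
proof -
  obtain l where l1: "(\<Sum>i\<in>B. l i) = 1" and lR: "\<forall>j\<in>{1..n}. R j = (\<Sum>i\<in>B. l i * P i j)"
    using assms(1) unfolding inaff_def by auto
  define l' where "l' i = (if i \<in> B then l i else 0)" for i
  have e1: "(\<Sum>i\<in>A. l' i) = (\<Sum>i\<in>B. l i)"
    using sum.inter_restrict[OF assms(3), of l B, symmetric] assms(2)
    by (simp add: l'_def Int_absorb1)
  have e2: "(\<Sum>i\<in>A. l' i * P i j) = (\<Sum>i\<in>B. l i * P i j)" for j
  proof -
    have "(\<Sum>i\<in>A. l' i * P i j) = (\<Sum>i\<in>A. if i \<in> B then l i * P i j else 0)"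
      by (rule sum.cong) (auto simp: l'_def)
    also have "\<dots> = (\<Sum>i\<in>B. l i * P i j)"
      using sum.inter_restrict[OF assms(3), of "\<lambda>i. l i * P i j" B, symmetric] assms(2)
      by (simp add: Int_absorb1)
    finally show ?thesis .
  qed
  show ?thesis unfolding inaff_def using e1 e2 l1 lR by (intro exI[of _ l']) auto
qed

lemma inaff_P:
  assumes "i \<in> A" "finite A"
  shows "inaff n P A (P i)"
proof -
  have "(\<Sum>k\<in>A. (if k = i then 1 else 0) * P k j) = P i j" for j
  proof -
    have "(\<Sum>k\<in>A. (if k = i then 1 else 0) * P k j) = (\<Sum>k\<in>A. if k = i then P k j else 0)"
      by (rule sum.cong) auto
    also have "\<dots> = P i j" using assms by simp
    finally show ?thesis .
  qed
  then show ?thesis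
    unfolding inaff_def using assms
    by (intro exI[of _ "\<lambda>k. if k = i then 1 else 0"]) simp
qed

lemma lin_mono:
  assumes "pos n Q1" "pos n Q2"
  shows "lin n Q1 Q2 Q1 \<le> lin n Q2 Q2 Q1"
proof -
  have "lin n Q1 Q2 Q1 - lin n Q2 Q2 Q1 = (\<Sum>j=1..n. (Q1 j - Q2 j) * (ln (Q2 j) - ln (Q1 j)))"
    unfolding lin_def sum_subtractf[symmetric]
    by (rule sum.cong) (use assms in \<open>auto simp: pos_def ln_divide_pos algebra_simps\<close>)
  also have "\<dots> \<le> 0"
  proof (rule sum_nonpos)
    fix j assume j: "j \<in> {1..n}"
    have a: "Q1 j > 0" "Q2 j > 0" using assms j by (auto simp: pos_def)
    show "(Q1 j - Q2 j) * (ln (Q2 j) - ln (Q1 j)) \<le> 0"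
    proof (cases "Q1 j \<le> Q2 j")
      case True
      then have "ln (Q1 j) \<le> ln (Q2 j)" using a by simp
      then show ?thesis using True by (simp add: mult_nonpos_nonneg)
    next
      case False
      then have "ln (Q2 j) \<le> ln (Q1 j)" using a by simp
      then show ?thesis using False by (simp add: mult_nonneg_nonpos)
    qed
  qed
  finally show ?thesis by simp
qed

lemma gibbs:
  assumes "pos n Q" "pos n Q'" "(\<Sum>j=1..n. Q j) = 1" "(\<Sum>j=1..n. Q' j) = 1"
  shows "KL n Q Q' \<ge> 0" "KL n Q Q' \<le> 0 \<Longrightarrow> \<forall>j\<in>{1..n}. Q j = Q' j"
proof -
  define t where "t j = Q j * (Q' j / Q j - 1) - Q j * ln (Q' j / Q j)" for j
  have tnn: "t j \<ge> 0" if "j \<in> {1..n}" for j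
  proof -
    have a: "Q j > 0" "Q' j > 0" using assms that by (auto simp: pos_def)
    have "ln (Q' j / Q j) \<le> Q' j / Q j - 1" using a by (intro ln_le_minus_one) simp
    then show ?thesis unfolding t_def using a
      by (simp add: right_diff_distrib[symmetric])
  qed
  have st: "(\<Sum>j=1..n. t j) = KL n Q Q'"
  proof -
    have "(\<Sum>j=1..n. t j) = (\<Sum>j=1..n. (Q' j - Q j) + Q j * ln (Q j / Q' j))"
    proof (rule sum.cong)
      fix j assume j: "j \<in> {1..n}"
      have a: "Q j > 0" "Q' j > 0" using assms j by (auto simp: pos_def)
      have "Q j * (Q' j / Q j - 1) = Q' j - Q j" using a by (simp add: field_simps)
      moreover have "ln (Q' j / Q j) = - ln (Q j / Q' j)" using a by (simp add: ln_divide_pos)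
      ultimately show "t j = (Q' j - Q j) + Q j * ln (Q j / Q' j)" unfolding t_def by simp
    qed simp
    also have "\<dots> = KL n Q Q'"
      using assms(3,4) by (simp add: sum.distrib sum_subtractf KL_def)
    finally show ?thesis .
  qed
  show "KL n Q Q' \<ge> 0" using st tnn by (metis sum_nonneg)
  assume "KL n Q Q' \<le> 0"
  then have "(\<Sum>j=1..n. t j) = 0" using st \<open>KL n Q Q' \<ge> 0\<close> by simp
  then have z: "\<forall>j\<in>{1..n}. t j = 0" using tnn by (subst (asm) sum_nonneg_eq_0_iff) auto
  show "\<forall>j\<in>{1..n}. Q j = Q' j"
  proof
    fix j assume j: "j \<in> {1..n}"
    have a: "Q j > 0" "Q' j > 0" using assms j by (auto simp: pos_def)
    have "Q j * (ln (Q' j / Q j) - (Q' j / Q j - 1)) = 0" using z j unfolding t_def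
      by (simp add: algebra_simps)
    then have "ln (Q' j / Q j) - (Q' j / Q j - 1) = 0" using a by (simp del: mult_eq_0_iff add: mult_eq_0_iff[of "Q j"])
    then have "ln (Q' j / Q j) = Q' j / Q j - 1" by simp
    then have "Q' j / Q j = 1" using a by (intro ln_eq_minus_one) auto
    then show "Q j = Q' j" using a by simp
  qed
qed

lemma out_pos:
  assumes "closed_simplex m l" "\<forall>i\<in>{1..m}. pos n (P i)"
  shows "pos n (out_dist m P l)"
proof -
  from assms(1) have l0: "\<forall>i\<in>{1..m}. l i \<ge> 0" and l1: "(\<Sum>i=1..m. l i) = 1"
    unfolding closed_simplex_def by auto
  obtain i0 where i0: "i0 \<in> {1..m}" "l i0 > 0"
  proof (rule ccontr)
    assume "\<not> thesis"
    then have "\<forall>i\<in>{1..m}. l i \<le> 0" using that by force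
    then have "(\<Sum>i=1..m. l i) \<le> 0" by (intro sum_nonpos) auto
    then show False using l1 by simp
  qed
  show ?thesis unfolding pos_def out_dist_def
  proof
    fix j assume j: "j \<in> {1..n}"
    show "0 < (\<Sum>i=1..m. l i * P i j)"
    proof (rule sum_pos2[OF _ i0(1)])
      show "0 < l i0 * P i0 j" using assms(2) j i0 by (simp add: pos_def)
      fix i assume i: "i \<in> {1..m}"
      have "l i \<ge> 0" "P i j > 0" using l0 assms(2) i j by (auto simp: pos_def)
      then show "0 \<le> l i * P i j" by simp
    qed simp
  qed
qed

lemma MI_rewrite:
  assumes rows: "\<forall>i\<in>{1..m}. pos n (P i)" and "pos n Qs" and "pos n (out_dist m P l)"
  shows "mutual_info m n P l = (\<Sum>i=1..m. l i * KL n (P i) Qs) - KL n (out_dist m P l) Qs"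
proof -
  let ?Q = "out_dist m P l"
  have "mutual_info m n P l = (\<Sum>i=1..m. \<Sum>j=1..n. l i * P i j * ln (P i j / Qs j) - l i * P i j * ln (?Q j / Qs j))"
    unfolding mutual_info_def
  proof (intro sum.cong refl)
    fix i j assume i: "i \<in> {1..m}" and j: "j \<in> {1..n}"
    have "ln (P i j / ?Q j) = ln (P i j / Qs j) - ln (?Q j / Qs j)"
      using assms i j by (auto simp: pos_def ln_divide_pos)
    then show "l i * P i j * ln (P i j / ?Q j) = l i * P i j * ln (P i j / Qs j) - l i * P i j * ln (?Q j / Qs j)"
      by (metis right_diff_distrib)
  qed
  also have "\<dots> = (\<Sum>i=1..m. l i * KL n (P i) Qs) - (\<Sum>i=1..m. \<Sum>j=1..n. l i * P i j * ln (?Q j / Qs j))"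
    by (simp add: sum_subtractf KL_def sum_distrib_left mult.assoc)
  also have "(\<Sum>i=1..m. \<Sum>j=1..n. l i * P i j * ln (?Q j / Qs j)) = KL n ?Q Qs"
    by (subst sum.swap) (simp add: KL_def out_dist_def sum_distrib_right)
  finally show ?thesis .
qed

theorem theorem13:
  fixes m n K :: nat and P Q lam :: "nat \<Rightarrow> nat \<Rightarrow> real"
  assumes m2: "m \<ge> 2"
    and rows: "\<forall>i\<in>{1..m}. open_simplex n (P i)"
    and gp: "general_position m n P"
    and Q0: "Q 0 \<in> affL n P {1..m}"
    and equi: "\<forall>i\<in>{1..m}. KL n (P i) (Q 0) = KL n (P 1) (Q 0)"
    and Qrec: "\<forall>k\<in>{1..m-2}. is_proj n (Q (k-1)) (affL n P {k+1..m}) (Q k)"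
    and bary: "\<forall>k\<in>{0..m-2}. is_bary m n P (Q k) (lam k)"
    and K: "K \<le> m - 2"
    and before: "\<forall>k<K. (\<forall>i\<in>{1..k}. lam k i = 0) \<and> lam k (k+1) < 0
                       \<and> (\<forall>i\<in>{k+2..m}. lam k i > 0)"
    and atK0: "K = 0 \<longrightarrow> (\<forall>i\<in>{1..m}. lam 0 i \<ge> 0)"
    and atK: "K > 0 \<longrightarrow> (\<forall>i\<in>{1..K}. lam K i = 0) \<and> (\<forall>i\<in>{K+1..m}. lam K i > 0)"
  shows "(\<exists>l. closed_simplex m l \<and> mutual_info m n P l = capacity m n P)
       \<and> (\<forall>l. closed_simplex m l \<and> mutual_info m n P l = capacity m n P \<longrightarrow>
              (\<forall>j\<in>{1..n}. out_dist m P l j = Q K j))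
       \<and> capacity m n P = KL n (P (K+1)) (Q K)"
proof -
  have posP: "pos n (P i)" and sumP: "(\<Sum>j=1..n. P i j) = 1" if "i \<in> {1..m}" for i
    using rows that by (auto simp: open_simplex_def pos_def)
  have Qaff: "Q k \<in> affL n P {k+1..m}" if "k \<le> m - 2" for k
  proof (cases "k = 0")
    case True then show ?thesis using Q0 by simp
  next
    case False then show ?thesis using Qrec that by (auto simp: is_proj_def)
  qed
  have posQ: "pos n (Q k)" and sumQ: "(\<Sum>j=1..n. Q k j) = 1" and inaffQ: "inaff n P {k+1..m} (Q k)"
    if "k \<le> m - 2" for k
    using Qaff[OF that] by (auto simp: affL_def open_simplex_def pos_def inaff_def)
  have fock: "lin n R (Q k) (Q (k-1)) = KL n (Q k) (Q (k-1))"
    if k: "1 \<le> k" "k \<le> m - 2" and R: "inaff n P {k+1..m} R" for k R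
  proof (rule foc[OF _ _ _ _ R])
    have "k - 1 \<le> m - 2" using k by simp
    from posQ[OF this] show "\<forall>j\<in>{1..n}. 0 < Q (k - 1) j" unfolding pos_def .
    have "k \<in> {1..m-2}" using k by simp
    then show "is_proj n (Q (k - 1)) (affL n P {k + 1..m}) (Q k)" using Qrec by blast
    show "\<forall>i\<in>{k + 1..m}. (\<Sum>j=1..n. P i j) = 1" using sumP by auto
  qed simp
  define cc where "cc k = KL n (P m) (Q k)" for k
  have E: "\<forall>i\<in>{k+1..m}. KL n (P i) (Q k) = cc k" if "k \<le> m - 2" for k
    using that
  proof (induction k)
    case 0
    show ?case
    proof
      fix i assume "i \<in> {0+1..m}"
      then have i: "i \<in> {1..m}" by simp
      have m1: "m \<in> {1..m}" using m2 by simp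
      have a: "KL n (P i) (Q 0) = KL n (P 1) (Q 0)" using equi i by blast
      have b: "KL n (P m) (Q 0) = KL n (P 1) (Q 0)" using equi m1 by blast
      show "KL n (P i) (Q 0) = cc 0" unfolding cc_def using a b by linarith
    qed
  next
    case (Suc k)
    have split: "KL n (P i) (Q (Suc k)) = KL n (P i) (Q k) - KL n (Q (Suc k)) (Q k)"
      if i: "i \<in> {Suc k+1..m}" for i
    proof -
      have "KL n (P i) (Q (Suc k)) = KL n (P i) (Q k) - lin n (P i) (Q (Suc k)) (Q k)"
        using i Suc.prems by (intro KL_split posP posQ) auto
      also have "lin n (P i) (Q (Suc k)) (Q k) = KL n (Q (Suc k)) (Q k)"
        using fock[of "Suc k" "P i"] i Suc.prems inaff_P[OF i] by simp
      finally show ?thesis .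
    qed
    show ?case
    proof
      fix i assume i: "i \<in> {Suc k+1..m}"
      have mm: "m \<in> {Suc k+1..m}" using Suc.prems m2 by auto
      have IH: "\<forall>i\<in>{k+1..m}. KL n (P i) (Q k) = cc k" using Suc.prems by (intro Suc.IH) simp
      have i': "i \<in> {k+1..m}" using i by simp
      have mm': "m \<in> {k+1..m}" using mm by simp
      have c1: "KL n (P i) (Q k) = cc k" using IH i' by blast
      have c2: "KL n (P m) (Q k) = cc k" using IH mm' by blast
      have a: "KL n (P i) (Q (Suc k)) = KL n (P i) (Q k) - KL n (Q (Suc k)) (Q k)" by (rule split[OF i])
      have b: "KL n (P m) (Q (Suc k)) = KL n (P m) (Q k) - KL n (Q (Suc k)) (Q k)" by (rule split[OF mm])
      show "KL n (P i) (Q (Suc k)) = cc (Suc k)"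
        unfolding cc_def using a b c1 c2 by linarith
    qed
  qed
  have T: "\<forall>R. inaff n P {K+1..m} R \<longrightarrow> lin n R (Q K) (Q (K-d)) = lin n (Q K) (Q K) (Q (K-d))"
    if "d \<le> K" for d
    using that
  proof (induction d)
    case 0 then show ?case by (simp add: lin_self)
  next
    case (Suc d)
    define k where "k = K - Suc d"
    have kd: "K - d = Suc k" using Suc.prems by (simp add: k_def)
    have kK: "Suc k \<le> K" using Suc.prems by (simp add: k_def)
    show ?case
    proof (intro allI impI)
      fix R assume R: "inaff n P {K+1..m} R"
      have QK: "inaff n P {K+1..m} (Q K)" using inaffQ K by simp
      have step: "lin n S (Q K) (Q k) = lin n S (Q K) (Q (Suc k)) + KL n (Q (Suc k)) (Q k)"
        if S: "inaff n P {K+1..m} S" for S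
      proof -
        have "lin n S (Q K) (Q k) = lin n S (Q K) (Q (Suc k)) + lin n S (Q (Suc k)) (Q k)"
          using K kK by (intro lin_add posQ) auto
        moreover have "inaff n P {Suc k+1..m} S"
          using S kK by (intro inaff_mono[OF S]) auto
        then have "lin n S (Q (Suc k)) (Q k) = KL n (Q (Suc k)) (Q k)"
          using fock[of "Suc k" S] K kK by simp
        ultimately show ?thesis by simp
      qed
      show "lin n R (Q K) (Q (K - Suc d)) = lin n (Q K) (Q K) (Q (K - Suc d))"
        unfolding k_def[symmetric] using step[OF R] step[OF QK] Suc.IH Suc.prems R kd by simp
    qed
  qed
  have I: "\<forall>i\<in>{K-d+1..m}. KL n (P i) (Q K) \<le> KL n (P m) (Q K)" if "d \<le> K" for d
    using that
  proof (induction d)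
    case 0
    show ?case
    proof
      fix i assume "i \<in> {K-0+1..m}"
      then have "i \<in> {K+1..m}" by simp
      then have "KL n (P i) (Q K) = cc K" using E[OF K] by blast
      then show "KL n (P i) (Q K) \<le> KL n (P m) (Q K)" by (simp add: cc_def)
    qed
  next
    case (Suc d)
    define k where "k = K - Suc d"
    have kd: "K - d = Suc k" using Suc.prems by (simp add: k_def)
    have kK: "k < K" using Suc.prems by (simp add: k_def)
    have km: "k \<le> m - 2" using kK K by simp
    define phi where "phi R = lin n R (Q K) (Q k)" for R
    define s where "s = phi (Q K)"
    have IH: "\<forall>i\<in>{Suc k+1..m}. KL n (P i) (Q K) \<le> KL n (P m) (Q K)"
      using Suc.IH Suc.prems kd by simp
    have mK: "m \<in> {K+1..m}" using K m2 by auto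
    have eqKk: "K - (K - k) = k" using kK by simp
    have T': "\<forall>R. inaff n P {K+1..m} R \<longrightarrow> lin n R (Q K) (Q k) = lin n (Q K) (Q K) (Q k)"
      using T[OF diff_le_self[of K k]] unfolding eqKk .
    have phiK: "phi (P i) = s" if "i \<in> {K+1..m}" for i
      using T' inaff_P[OF that] unfolding phi_def s_def by blast
    have KLsplit: "KL n (P i) (Q K) = KL n (P i) (Q k) - phi (P i)" if "i \<in> {1..m}" for i
      unfolding phi_def using that K km by (intro KL_split posP posQ) auto
    have Em: "KL n (P m) (Q K) = KL n (P m) (Q k) - s"
      using KLsplit[of m] phiK[OF mK] m2 by simp
    have ge: "phi (P i) \<ge> s" if i: "i \<in> {Suc k+1..m}" for i
    proof -
      have "KL n (P i) (Q K) \<le> KL n (P m) (Q K)" using IH i by blast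
      moreover have "KL n (P i) (Q k) = KL n (P m) (Q k)"
      proof -
        have "i \<in> {k+1..m}" using i by simp
        then have "KL n (P i) (Q k) = cc k" using E[OF km] by blast
        then show ?thesis by (simp add: cc_def)
      qed
      moreover have "i \<in> {1..m}" using i by simp
      ultimately show ?thesis using KLsplit[of i] Em by simp
    qed
    have bk: "lam k i = 0" if "i \<in> {1..k}" for i using before kK that by auto
    have bk1: "lam k (k+1) < 0" using before kK by auto
    have bk2: "lam k i > 0" if "i \<in> {k+2..m}" for i using before kK that by auto
    have bQ: "(\<Sum>i=1..m. lam k i) = 1" "\<forall>j\<in>{1..n}. Q k j = (\<Sum>i=1..m. lam k i * P i j)"
      using bary km by (auto simp: is_bary_def)
    have phiQ: "phi (Q k) = (\<Sum>i=1..m. lam k i * phi (P i))"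
      unfolding phi_def by (rule lin_comb[OF bQ(2)])
    have "phi (Q k) \<le> s"
      unfolding phi_def s_def using lin_mono[OF posQ[OF km] posQ[OF K]] .
    moreover have "(\<Sum>i=1..m. lam k i * (phi (P i) - s)) = (\<Sum>i=1..m. lam k i * phi (P i)) - (\<Sum>i=1..m. lam k i) * s"
      by (simp add: right_diff_distrib sum_subtractf sum_distrib_right)
    ultimately have "(\<Sum>i=1..m. lam k i * (phi (P i) - s)) \<le> 0"
      using phiQ bQ(1) by simp
    moreover have k1: "k + 1 \<in> {1..m}" using km m2 by auto
    have "(\<Sum>i=1..m. lam k i * (phi (P i) - s))
        = lam k (k+1) * (phi (P (k+1)) - s) + (\<Sum>i\<in>{1..m} - {k+1}. lam k i * (phi (P i) - s))"
      by (rule sum.remove[OF _ k1]) simp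
    moreover have "(\<Sum>i\<in>{1..m} - {k+1}. lam k i * (phi (P i) - s)) \<ge> 0"
    proof (rule sum_nonneg)
      fix i assume i: "i \<in> {1..m} - {k+1}"
      show "0 \<le> lam k i * (phi (P i) - s)"
      proof (cases "i \<le> k")
        case True then show ?thesis using bk i by simp
      next
        case False
        then have "i \<in> {k+2..m}" "i \<in> {Suc k+1..m}" using i by auto
        then show ?thesis using bk2 ge by (simp add: less_imp_le)
      qed
    qed
    ultimately have "lam k (k+1) * (phi (P (k+1)) - s) \<le> 0" by linarith
    then have "phi (P (k+1)) - s \<ge> 0" using bk1
      by (simp add: mult_le_0_iff)
    then have new: "KL n (P (k+1)) (Q K) \<le> KL n (P m) (Q K)"
    proof -
      have "k+1 \<in> {k+1..m}" using k1 by simp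
      then have "KL n (P (k+1)) (Q k) = cc k" using E[OF km] by blast
      then have "KL n (P (k+1)) (Q k) = KL n (P m) (Q k)" by (simp add: cc_def)
      then show ?thesis using KLsplit[OF k1] Em \<open>phi (P (k+1)) - s \<ge> 0\<close> by linarith
    qed
    show ?case
    proof
      fix i assume i: "i \<in> {K - Suc d + 1..m}"
      show "KL n (P i) (Q K) \<le> KL n (P m) (Q K)"
      proof (cases "i = k+1")
        case True then show ?thesis using new by simp
      next
        case False then have "i \<in> {Suc k+1..m}" using i by (auto simp: k_def)
        then show ?thesis using IH by blast
      qed
    qed
  qed
  define C where "C = KL n (P m) (Q K)"
  have allle: "KL n (P i) (Q K) \<le> C" if "i \<in> {1..m}" for i
    using I[of K] that by (simp add: C_def)
  have CK: "KL n (P (K+1)) (Q K) = C"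
  proof -
    have "K+1 \<in> {K+1..m}" using K m2 by simp
    then have "KL n (P (K+1)) (Q K) = cc K" using E[OF K] by blast
    then show ?thesis by (simp add: C_def cc_def)
  qed
  define ls where "ls = lam K"
  have lsb: "(\<Sum>i=1..m. ls i) = 1" "\<forall>j\<in>{1..n}. Q K j = (\<Sum>i=1..m. ls i * P i j)"
    using bary K by (auto simp: is_bary_def ls_def)
  have lsnn: "ls i \<ge> 0" if "i \<in> {1..m}" for i
  proof (cases "K = 0")
    case True then show ?thesis using atK0 that by (simp add: ls_def)
  next
    case False
    then show ?thesis using atK that by (cases "i \<le> K") (auto simp: ls_def less_imp_le)
  qed
  have lscl: "closed_simplex m ls" using lsb lsnn by (simp add: closed_simplex_def)
  have outs: "\<forall>j\<in>{1..n}. out_dist m P ls j = Q K j" using lsb by (simp add: out_dist_def)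
  have posQK: "pos n (Q K)" using posQ K by simp
  have sumQK: "(\<Sum>j=1..n. Q K j) = 1" using sumQ K by simp
  have posP': "\<forall>i\<in>{1..m}. pos n (P i)" using posP by blast
  have MIle: "mutual_info m n P l \<le> C - KL n (out_dist m P l) (Q K)" and sumO: "(\<Sum>j=1..n. out_dist m P l j) = 1"
    if l: "closed_simplex m l" for l
  proof -
    have l0: "\<forall>i\<in>{1..m}. l i \<ge> 0" and l1: "(\<Sum>i=1..m. l i) = 1"
      using l unfolding closed_simplex_def by auto
    have "(\<Sum>i=1..m. l i * KL n (P i) (Q K)) \<le> (\<Sum>i=1..m. l i * C)"
      using l0 allle by (intro sum_mono mult_left_mono) auto
    also have "\<dots> = C" using l1 by (simp add: sum_distrib_right[symmetric])
    finally show "mutual_info m n P l \<le> C - KL n (out_dist m P l) (Q K)"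
      using MI_rewrite[OF posP' posQK out_pos[OF l posP']] by simp
    have "(\<Sum>j=1..n. out_dist m P l j) = (\<Sum>i=1..m. l i * (\<Sum>j=1..n. P i j))"
      unfolding out_dist_def by (subst sum.swap) (simp add: sum_distrib_left)
    also have "\<dots> = 1" using sumP l1 by simp
    finally show "(\<Sum>j=1..n. out_dist m P l j) = 1" .
  qed
  have KLself: "KL n (Q K) (Q K) = 0"
    using posQK by (auto simp: KL_def pos_def intro!: sum.neutral)
  have MIls: "mutual_info m n P ls = C"
  proof -
    have "(\<Sum>i=1..m. ls i * KL n (P i) (Q K)) = (\<Sum>i=1..m. ls i * C)"
    proof (rule sum.cong)
      fix i assume i: "i \<in> {1..m}"
      show "ls i * KL n (P i) (Q K) = ls i * C"
      proof (cases "i \<le> K")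
        case True then have "K > 0" "ls i = 0" using i atK by (auto simp: ls_def)
        then show ?thesis by simp
      next
        case False
        then have "i \<in> {K+1..m}" using i by simp
        then have "KL n (P i) (Q K) = cc K" using E[OF K] by blast
        then show ?thesis by (simp add: C_def cc_def)
      qed
    qed simp
    also have "\<dots> = C" using lsb(1) by (simp add: sum_distrib_right[symmetric])
    finally have s: "(\<Sum>i=1..m. ls i * KL n (P i) (Q K)) = C" .
    have "KL n (out_dist m P ls) (Q K) = KL n (Q K) (Q K)"
      using outs by (simp add: KL_def)
    then show ?thesis using MI_rewrite[OF posP' posQK out_pos[OF lscl posP']] s KLself by simp
  qed
  have capC: "capacity m n P = C"
    unfolding capacity_def
  proof (rule cSup_eq_maximum)
    show "C \<in> {mutual_info m n P l |l. closed_simplex m l}" using MIls lscl by (metis (mono_tags, lifting) mem_Collect_eq)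
    fix x assume "x \<in> {mutual_info m n P l |l. closed_simplex m l}"
    then obtain l where l: "closed_simplex m l" "x = mutual_info m n P l" by auto
    show "x \<le> C" using MIle[OF l(1)] gibbs(1)[OF out_pos[OF l(1) posP'] posQK sumO[OF l(1)] sumQK] l(2)
      by simp
  qed
  have uniq: "\<forall>j\<in>{1..n}. out_dist m P l j = Q K j"
    if l: "closed_simplex m l" "mutual_info m n P l = capacity m n P" for l
  proof -
    have "KL n (out_dist m P l) (Q K) \<le> 0" using MIle[OF l(1)] l(2) capC by simp
    then show ?thesis using gibbs(2)[OF out_pos[OF l(1) posP'] posQK sumO[OF l(1)] sumQK] by simp
  qed
  show ?thesis using lscl MIls capC uniq CK by auto
qed
end
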